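(* For every integer $m\ge 4$ with $m\ne 5$, $\chi_{ei}(C_m\square C_7)=4$.
   Context: All graphs are finite and simple. $C_k$ denotes the cycle on $k$ vertices. A path $P_4$ in $G$ is a sequence $uxyv$ of four distinct vertices with $ux,xy,yv\in E(G)$; $u,v$ are its end vertices. An $e$-injective $k$-coloring of $G$ is a function $f:V(G)\to\{1,\dots,k\}$ with $f(u)\ne f(v)$ whenever $u,v$ are the end vertices of some path $P_4$ in $G$; $\chi_{ei}(G)$ is the least such $k$. In the Cartesian product $G\square H$ two vertices are adjacent if they are adjacent in one coordinate and equal in the other. *)

theory Defs
  imports Main
begin

text \<open>A finite simple graph is given by a vertex set V and a symmetric,
irreflexive adjacency relation E (only its restriction to V matters).\<close>

definition cycle_verts :: "nat \<Rightarrow> nat set" where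
  "cycle_verts k = {0..<k}"

definition cycle_adj :: "nat \<Rightarrow> nat \<Rightarrow> nat \<Rightarrow> bool" where
  "cycle_adj k i j \<longleftrightarrow> i < k \<and> j < k \<and> (j = (i + 1) mod k \<or> i = (j + 1) mod k)"

definition cart_verts :: "'a set \<Rightarrow> 'b set \<Rightarrow> ('a \<times> 'b) set" where
  "cart_verts V W = V \<times> W"

definition cart_adj :: "('a \<Rightarrow> 'a \<Rightarrow> bool) \<Rightarrow> ('b \<Rightarrow> 'b \<Rightarrow> bool)
    \<Rightarrow> 'a \<times> 'b \<Rightarrow> 'a \<times> 'b \<Rightarrow> bool" where
  "cart_adj E F p q \<longleftrightarrow>
     (E (fst p) (fst q) \<and> snd p = snd q) \<or> (fst p = fst q \<and> F (snd p) (snd q))"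

definition P4_ends :: "'a set \<Rightarrow> ('a \<Rightarrow> 'a \<Rightarrow> bool) \<Rightarrow> 'a \<Rightarrow> 'a \<Rightarrow> bool" where
  "P4_ends V E u v \<longleftrightarrow> (\<exists>x y. u \<in> V \<and> x \<in> V \<and> y \<in> V \<and> v \<in> V \<and>
      distinct [u, x, y, v] \<and> E u x \<and> E x y \<and> E y v)"

definition e_injective_coloring :: "'a set \<Rightarrow> ('a \<Rightarrow> 'a \<Rightarrow> bool) \<Rightarrow> nat \<Rightarrow> ('a \<Rightarrow> nat) \<Rightarrow> bool" where
  "e_injective_coloring V E k f \<longleftrightarrow>
     (\<forall>v\<in>V. f v \<in> {1..k}) \<and> (\<forall>u v. P4_ends V E u v \<longrightarrow> f u \<noteq> f v)"

definition chi_ei :: "'a set \<Rightarrow> ('a \<Rightarrow> 'a \<Rightarrow> bool) \<Rightarrow> nat" where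
  "chi_ei V E = (LEAST k. \<exists>f. e_injective_coloring V E k f)"

end

theory Submission
  imports Defs
begin

definition tbl :: "nat list list" where
  "tbl = [[1, 3, 2, 4, 2, 4, 3], [3, 1, 4, 2, 4, 2, 1], [1, 3, 1, 4, 2, 4, 2],
          [2, 1, 3, 1, 4, 2, 4], [4, 2, 1, 3, 1, 3, 2], [2, 4, 2, 1, 3, 1, 3],
          [3, 2, 4, 2, 1, 3, 1]]"

definition Fc :: "nat \<Rightarrow> nat \<Rightarrow> nat" where
  "Fc t j = tbl ! t ! j"

definition T :: "nat \<Rightarrow> nat \<Rightarrow> nat" where
  "T m i = (if even m then i mod 2 else if i < m - 5 then i mod 2 else i - (m - 5) + 2)"

definition Wlist :: "nat list list" where
  "Wlist = [[0,1,0,1],[1,0,1,0],[1,0,1,2],[0,1,2,3],[1,2,3,4],[2,3,4,5],[3,4,5,6],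
            [4,5,6,0],[5,6,0,1],[6,0,1,0],[6,0,1,2]]"

definition doff :: "nat \<Rightarrow> nat list" where
  "doff e = [[1,3,4,6],[0,2,5],[1,6],[0]] ! e"

definition win :: "nat \<Rightarrow> nat \<Rightarrow> nat list" where
  "win m i = map (\<lambda>k. T m ((i + k) mod m)) [0..<4]"

lemma win_expand:
  assumes "i < m"
  shows "win m i = [T m i, T m ((i+1) mod m), T m ((i+2) mod m), T m ((i+3) mod m)]"
proof -
  have "[0..<4] = [0,1,2,3::nat]" by code_simp
  then show ?thesis using assms by (simp add: win_def)
qed

lemma check: "list_all (\<lambda>w. list_all (\<lambda>e. list_all (\<lambda>j. list_all
   (\<lambda>d. Fc (w!0) j \<noteq> Fc (w!e) ((j+d) mod 7)) (doff e)) [0..<7]) [0..<4]) Wlist"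
  by code_simp

lemma range_check0: "list_all (\<lambda>t. list_all (\<lambda>j. 1 \<le> Fc t j \<and> Fc t j \<le> 4) [0..<7]) [0..<7]"
  by code_simp

lemma range_check: "list_all (\<lambda>t. list_all (\<lambda>j. Fc t j \<in> {1..4}) [0..<7]) [0..<7]"
  using range_check0 by simp

lemma win_even:
  assumes "even m" "i < m" "m \<ge> 4"
  shows "win m i \<in> set Wlist"
proof -
  have h: "(i + k) mod m mod 2 = (i + k) mod 2" for k
    using assms(1) by (simp add: mod_mod_cancel)
  have t0: "T m i = i mod 2" using assms(1) by (simp add: T_def)
  have p1: "(i+1) mod 2 = 1 - i mod 2" by presburger
  have t1: "T m ((i+1) mod m) = 1 - i mod 2"
    using assms(1) h[of 1] p1 unfolding T_def by metis
  have p2: "(i+2) mod 2 = i mod 2" by presburger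
  have t2: "T m ((i+2) mod m) = i mod 2"
    using assms(1) h[of 2] p2 unfolding T_def by metis
  have p3: "(i+3) mod 2 = 1 - i mod 2" by presburger
  have t3: "T m ((i+3) mod m) = 1 - i mod 2"
    using assms(1) h[of 3] p3 unfolding T_def by metis
  show ?thesis
    unfolding win_expand[OF assms(2)] t0 t1 t2 t3
    by (cases "even i") (simp_all add: Wlist_def even_iff_mod_2_eq_zero odd_iff_mod_2_eq_one)
qed

lemma wrap: "m \<le> x \<Longrightarrow> x < 2*m \<Longrightarrow> x mod (m::nat) = x - m"
  by (simp add: le_mod_geq)

lemma win_odd:
  assumes "odd m" "i < m" "m \<ge> 7"
  shows "win m i \<in> set Wlist"
proof -
  obtain n where n: "m = 2*n + 7"
    using assms(1,3) by (metis dvd_def even_add odd_numeral nat_le_iff_add odd_two_times_div_two_nat add.commute le_add_diff_inverse)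
  have w: "win m i = [T m i, T m ((i+1) mod m), T m ((i+2) mod m), T m ((i+3) mod m)]"
    using assms(2) by (rule win_expand)
  have "i + 3 < 2*n+2 \<or> (i + 1 = 2*n \<and> n \<ge> 1) \<or> i = 2*n \<or> i = 2*n+1 \<or> i = 2*n+2 \<or> i = 2*n+3
     \<or> i = 2*n+4 \<or> i = 2*n+5 \<or> i = 2*n+6"
    using assms(2) n by linarith
  then show ?thesis
    unfolding w
  proof (elim disjE)
    assume a: "i + 3 < 2*n+2"
    have t0: "T m i = i mod 2" using a assms(1) n by (simp add: T_def)
    have p1: "(i+1) mod 2 = 1 - i mod 2" by presburger
    have q1: "(i+1) mod m = i+1" using a n by (simp; arith)
    have t1: "T m ((i+1) mod m) = 1 - i mod 2"
      using a assms(1) n p1 q1 unfolding T_def by auto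
    have p2: "(i+2) mod 2 = i mod 2" by presburger
    have q2: "(i+2) mod m = i+2" using a n by (simp; arith)
    have t2: "T m ((i+2) mod m) = i mod 2"
      using a assms(1) n p2 q2 unfolding T_def by auto
    have p3: "(i+3) mod 2 = 1 - i mod 2" by presburger
    have q3: "(i+3) mod m = i+3" using a n by (simp; arith)
    have t3: "T m ((i+3) mod m) = 1 - i mod 2"
      using a assms(1) n p3 q3 unfolding T_def by auto
    show "[T m i, T m ((i+1) mod m), T m ((i+2) mod m), T m ((i+3) mod m)] \<in> set Wlist"
      unfolding t0 t1 t2 t3
      by (cases "even i") (simp_all add: Wlist_def even_iff_mod_2_eq_zero odd_iff_mod_2_eq_one)
  next
    assume a: "i + 1 = 2*n \<and> n \<ge> 1"
    have q0: "(i+0) mod m = i" using a n by simp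
    have par: "i mod 2 = 1" "i < 2*n+2" using a by presburger+
    have q1: "(i+1) mod m = 2*n+0" using a n by (simp; arith)
    have q2: "(i+2) mod m = 2*n+1" using a n by (simp; arith)
    have q3: "(i+3) mod m = 2*n+2" using a n by (simp; arith)
    show "[T m i, T m ((i+1) mod m), T m ((i+2) mod m), T m ((i+3) mod m)] \<in> set Wlist"
      using q0 q1 q2 q3 a assms(1) n par
      by (simp add: T_def Wlist_def)
  next
    assume a: "i = 2*n"
    have q0: "(i+0) mod m = 2*n+0" using a n by (simp; arith)
    have q1: "(i+1) mod m = 2*n+1" using a n by (simp; arith)
    have q2: "(i+2) mod m = 2*n+2" using a n by (simp; arith)
    have q3: "(i+3) mod m = 2*n+3" using a n by (simp; arith)
    show "[T m i, T m ((i+1) mod m), T m ((i+2) mod m), T m ((i+3) mod m)] \<in> set Wlist"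
      using q0 q1 q2 q3 a assms(1) n
      by (cases "n = 0") (simp_all add: T_def Wlist_def)
  next
    assume a: "i = 2*n+1"
    have q0: "(i+0) mod m = 2*n+1" using a n by (simp; arith)
    have q1: "(i+1) mod m = 2*n+2" using a n by (simp; arith)
    have q2: "(i+2) mod m = 2*n+3" using a n by (simp; arith)
    have q3: "(i+3) mod m = 2*n+4" using a n by (simp; arith)
    show "[T m i, T m ((i+1) mod m), T m ((i+2) mod m), T m ((i+3) mod m)] \<in> set Wlist"
      using q0 q1 q2 q3 a assms(1) n
      by (cases "n = 0") (simp_all add: T_def Wlist_def)
  next
    assume a: "i = 2*n+2"
    have q0: "(i+0) mod m = 2*n+2" using a n by (simp; arith)
    have q1: "(i+1) mod m = 2*n+3" using a n by (simp; arith)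
    have q2: "(i+2) mod m = 2*n+4" using a n by (simp; arith)
    have q3: "(i+3) mod m = 2*n+5" using a n by (simp; arith)
    show "[T m i, T m ((i+1) mod m), T m ((i+2) mod m), T m ((i+3) mod m)] \<in> set Wlist"
      using q0 q1 q2 q3 a assms(1) n
      by (cases "n = 0") (simp_all add: T_def Wlist_def)
  next
    assume a: "i = 2*n+3"
    have q0: "(i+0) mod m = 2*n+3" using a n by (simp; arith)
    have q1: "(i+1) mod m = 2*n+4" using a n by (simp; arith)
    have q2: "(i+2) mod m = 2*n+5" using a n by (simp; arith)
    have q3: "(i+3) mod m = 2*n+6" using a n by (simp; arith)
    show "[T m i, T m ((i+1) mod m), T m ((i+2) mod m), T m ((i+3) mod m)] \<in> set Wlist"
      using q0 q1 q2 q3 a assms(1) n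
      by (cases "n = 0") (simp_all add: T_def Wlist_def)
  next
    assume a: "i = 2*n+4"
    have q0: "(i+0) mod m = 2*n+4" using a n by (simp; arith)
    have q1: "(i+1) mod m = 2*n+5" using a n by (simp; arith)
    have q2: "(i+2) mod m = 2*n+6" using a n by (simp; arith)
    have q3: "(i+3) mod m = 0" using a n wrap[of m "i+3"] by simp
    show "[T m i, T m ((i+1) mod m), T m ((i+2) mod m), T m ((i+3) mod m)] \<in> set Wlist"
      using q0 q1 q2 q3 a assms(1) n
      by (cases "n = 0") (simp_all add: T_def Wlist_def)
  next
    assume a: "i = 2*n+5"
    have q0: "(i+0) mod m = 2*n+5" using a n by (simp; arith)
    have q1: "(i+1) mod m = 2*n+6" using a n by (simp; arith)
    have q2: "(i+2) mod m = 0" using a n wrap[of m "i+2"] by simp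
    have q3: "(i+3) mod m = 1" using a n wrap[of m "i+3"] by simp
    show "[T m i, T m ((i+1) mod m), T m ((i+2) mod m), T m ((i+3) mod m)] \<in> set Wlist"
      using q0 q1 q2 q3 a assms(1) n
      by (cases "n = 0") (simp_all add: T_def Wlist_def)
  next
    assume a: "i = 2*n+6"
    have q0: "(i+0) mod m = 2*n+6" using a n by (simp; arith)
    have q1: "(i+1) mod m = 0" using a n wrap[of m "i+1"] by simp
    have q2: "(i+2) mod m = 1" using a n wrap[of m "i+2"] by simp
    have q3: "(i+3) mod m = 2" using a n wrap[of m "i+3"] by simp
    show "[T m i, T m ((i+1) mod m), T m ((i+2) mod m), T m ((i+3) mod m)] \<in> set Wlist"
      using q0 q1 q2 q3 a assms(1) n
      by (cases "n = 0") (simp_all add: T_def Wlist_def)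
  qed
qed


lemma win_all:
  assumes "m \<ge> 4" "m \<noteq> 5" "i < m"
  shows "win m i \<in> set Wlist"
proof (cases "even m")
  case True then show ?thesis using assms win_even by blast
next
  case False
  then have "m \<ge> 7" using assms(1,2) by presburger
  then show ?thesis using False assms win_odd by blast
qed

lemma T_lt: "m \<ge> 4 \<Longrightarrow> i < m \<Longrightarrow> T m i < 7"
  unfolding T_def by auto

lemma Fc_range: "t < 7 \<Longrightarrow> j < 7 \<Longrightarrow> Fc t j \<in> {1..4}"
  using range_check by (simp add: list_all_iff)

definition g :: "nat \<Rightarrow> int \<Rightarrow> int \<Rightarrow> nat" where
  "g m x y = Fc (T m (nat (x mod int m))) (nat (y mod 7))"

definition offs :: "int \<Rightarrow> int \<Rightarrow> bool" where
  "offs e d \<longleftrightarrow> \<bar>e\<bar> + \<bar>d\<bar> = 1 \<or> \<bar>e\<bar> + \<bar>d\<bar> = 3"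

lemma check_inst:
  assumes "w \<in> set Wlist" "e < 4" "j < 7" "d \<in> set (doff e)"
  shows "Fc (w!0) j \<noteq> Fc (w!e) ((j+d) mod 7)"
  using check assms by (simp add: list_all_iff)

lemma doff_mem:
  assumes "offs e d" "0 \<le> e"
  shows "nat e < 4 \<and> nat (d mod 7) \<in> set (doff (nat e))"
proof -
  have "e = 0 \<or> e = 1 \<or> e = 2 \<or> e = 3" using assms unfolding offs_def by arith
  moreover have "d = -3 \<or> d = -2 \<or> d = -1 \<or> d = 0 \<or> d = 1 \<or> d = 2 \<or> d = 3"
    using assms unfolding offs_def by arith
  ultimately show ?thesis using assms(1) unfolding offs_def
    by (elim disjE) (simp_all add: doff_def)
qed

lemma K_pos:
  assumes m: "m \<ge> 4" "m \<noteq> 5" and o: "offs e d" "0 \<le> e"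
  shows "g m x y \<noteq> g m (x+e) (y+d)"
proof -
  define i where "i = nat (x mod int m)"
  define j where "j = nat (y mod 7)"
  define e' where "e' = nat e"
  define d' where "d' = nat (d mod 7)"
  have im: "i < m" using m unfolding i_def by (simp add: nat_less_iff)
  have j7: "j < 7" unfolding j_def by (simp add: nat_less_iff)
  have ed: "e' < 4" "d' \<in> set (doff e')" using doff_mem[OF o] unfolding e'_def d'_def by auto
  have x1: "nat ((x+e) mod int m) = (i + e') mod m"
  proof -
    have "(x+e) mod int m = (x mod int m + e) mod int m" by (simp add: mod_add_left_eq)
    also have "\<dots> = int ((i + e') mod m)"
      using m o(2) unfolding i_def e'_def by (simp add: zmod_int)
    finally show ?thesis by simp
  qed
  have y1: "nat ((y+d) mod 7) = (j + d') mod 7"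
  proof -
    have "(y+d) mod 7 = (y mod 7 + d mod 7) mod (7::int)" by (simp add: mod_add_eq)
    also have "\<dots> = int ((j + d') mod 7)"
      unfolding j_def d'_def by (simp add: zmod_int)
    finally show ?thesis by simp
  qed
  have w: "win m i \<in> set Wlist" using win_all m im by blast
  have w0: "win m i ! 0 = T m i" using im by (simp add: win_def)
  have we: "win m i ! e' = T m ((i + e') mod m)" using ed(1) by (simp add: win_def)
  have "Fc (T m i) j \<noteq> Fc (T m ((i + e') mod m)) ((j+d') mod 7)"
    using check_inst[OF w ed(1) j7 ed(2)] w0 we by simp
  then show ?thesis unfolding g_def x1 y1 i_def j_def by simp
qed

lemma K:
  assumes m: "m \<ge> 4" "m \<noteq> 5" and o: "offs e d"
  shows "g m x y \<noteq> g m (x+e) (y+d)"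
proof (cases "0 \<le> e")
  case True then show ?thesis using K_pos m o by blast
next
  case False
  have "offs (-e) (-d)" using o by (simp add: offs_def)
  then have "g m (x+e) (y+d) \<noteq> g m (x+e+(-e)) (y+d+(-d))"
    using K_pos[OF m(1) m(2) \<open>offs (-e) (-d)\<close>, of "x+e" "y+d"] False by simp
  then show ?thesis by simp
qed


lemma cyc_step:
  assumes "cycle_adj k a b"
  shows "int b = (int a + 1) mod int k \<or> int b = (int a - 1) mod int k"
proof -
  have ab: "a < k" "b < k" "b = (a + 1) mod k \<or> a = (b + 1) mod k"
    using assms by (auto simp: cycle_adj_def)
  from ab(3) show ?thesis
  proof
    assume "b = (a + 1) mod k"
    then show ?thesis by (simp add: zmod_int add.commute)
  next
    assume h: "a = (b + 1) mod k"
    have "(int a - 1) mod int k = ((int b + 1) mod int k - 1) mod int k"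
      using h by (simp add: zmod_int add.commute)
    also have "\<dots> = (int b + 1 - 1) mod int k" by (simp add: mod_diff_left_eq)
    also have "\<dots> = int b" using ab(2) by simp
    finally show ?thesis by simp
  qed
qed

definition U :: "(int \<times> int) set" where
  "U = {(1,0), (-1,0), (0,1), (0,-1)}"

definition R :: "nat \<Rightarrow> nat \<times> nat \<Rightarrow> int \<Rightarrow> int \<Rightarrow> bool" where
  "R m p x y \<longleftrightarrow> int (fst p) = x mod int m \<and> int (snd p) = y mod 7"

lemma R_step:
  assumes "R m p x y" "cart_adj (cycle_adj m) (cycle_adj 7) p q"
    "p \<in> cart_verts (cycle_verts m) (cycle_verts 7)" "q \<in> cart_verts (cycle_verts m) (cycle_verts 7)"
  shows "\<exists>a b. (a, b) \<in> U \<and> R m q (x + a) (y + b)"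
proof -
  have pq: "fst p < m" "snd p < 7" "fst q < m" "snd q < 7"
    using assms(3,4) by (auto simp: cart_verts_def cycle_verts_def)
  have mv: "int (fst q) = (x + c) mod int m" if "int (fst q) = (int (fst p) + c) mod int m" for c
    using that assms(1) unfolding R_def by (simp add: mod_add_left_eq)
  have yv: "int (snd q) = (y + c) mod 7" if "int (snd q) = (int (snd p) + c) mod 7" for c
    using that assms(1) unfolding R_def by (simp add: mod_add_left_eq)
  have fe: "int (fst q) = (int (fst p) + 0) mod int m" if "fst q = fst p"
    using that pq by simp
  have se: "int (snd q) = (int (snd p) + 0) mod 7" if "snd q = snd p"
    using that pq by simp
  from assms(2) consider "cycle_adj m (fst p) (fst q)" "snd p = snd q"
    | "fst p = fst q" "cycle_adj 7 (snd p) (snd q)"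
    unfolding cart_adj_def by blast
  then show ?thesis
  proof cases
    case 1
    from cyc_step[OF 1(1)] consider "int (fst q) = (int (fst p) + 1) mod int m"
      | "int (fst q) = (int (fst p) + (-1)) mod int m" by fastforce
    then show ?thesis
    proof cases
      case 1
      then show ?thesis using mv yv se \<open>snd p = snd q\<close> unfolding R_def U_def
        by (metis insertI1 add.right_neutral)
    next
      case 2
      then show ?thesis using mv yv se \<open>snd p = snd q\<close> unfolding R_def U_def
        by (metis insertI1 insertI2 add.right_neutral)
    qed
  next
    case 2
    from cyc_step[OF 2(2)] consider "int (snd q) = (int (snd p) + 1) mod 7"
      | "int (snd q) = (int (snd p) + (-1)) mod 7" by fastforce
    then show ?thesis
    proof cases
      case 1
      then show ?thesis using mv yv fe \<open>fst p = fst q\<close> unfolding R_def U_def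
        by (metis insertI1 insertI2 add.right_neutral)
    next
      case 2
      then show ?thesis using mv yv fe \<open>fst p = fst q\<close> unfolding R_def U_def
        by (metis insertI1 insertI2 add.right_neutral)
    qed
  qed
qed

lemma U_offs:
  "(a1, b1) \<in> U \<Longrightarrow> (a2, b2) \<in> U \<Longrightarrow> (a3, b3) \<in> U \<Longrightarrow> offs (a1+a2+a3) (b1+b2+b3)"
  unfolding U_def offs_def by auto

lemma path_lemma:
  assumes "P4_ends (cart_verts (cycle_verts m) (cycle_verts 7)) (cart_adj (cycle_adj m) (cycle_adj 7)) u v"
  shows "\<exists>e d. offs e d \<and> R m v (int (fst u) + e) (int (snd u) + d)"
proof -
  let ?V = "cart_verts (cycle_verts m) (cycle_verts 7)"
  let ?E = "cart_adj (cycle_adj m) (cycle_adj 7)"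
  obtain x y where p: "u \<in> ?V" "x \<in> ?V" "y \<in> ?V" "v \<in> ?V" "?E u x" "?E x y" "?E y v"
    using assms unfolding P4_ends_def by blast
  have r0: "R m u (int (fst u)) (int (snd u))"
    using p(1) by (auto simp: R_def cart_verts_def cycle_verts_def)
  obtain a1 b1 where 1: "(a1, b1) \<in> U" "R m x (int (fst u) + a1) (int (snd u) + b1)"
    using R_step[OF r0 p(5) p(1) p(2)] by blast
  obtain a2 b2 where 2: "(a2, b2) \<in> U" "R m y (int (fst u) + a1 + a2) (int (snd u) + b1 + b2)"
    using R_step[OF 1(2) p(6) p(2) p(3)] by blast
  obtain a3 b3 where 3: "(a3, b3) \<in> U" "R m v (int (fst u) + a1 + a2 + a3) (int (snd u) + b1 + b2 + b3)"
    using R_step[OF 2(2) p(7) p(3) p(4)] by blast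
  show ?thesis
    using U_offs[OF 1(1) 2(1) 3(1)] 3(2) by (metis add.assoc)
qed

definition fcol :: "nat \<Rightarrow> nat \<times> nat \<Rightarrow> nat" where
  "fcol m p = Fc (T m (fst p)) (snd p)"

lemma R_g: "R m p x y \<Longrightarrow> m > 0 \<Longrightarrow> fcol m p = g m x y"
  unfolding R_def fcol_def g_def by (metis nat_int)

lemma upper:
  assumes "m \<ge> 4" "m \<noteq> 5"
  shows "e_injective_coloring (cart_verts (cycle_verts m) (cycle_verts 7))
                (cart_adj (cycle_adj m) (cycle_adj 7)) 4 (fcol m)"
  unfolding e_injective_coloring_def
proof (intro conjI allI impI ballI)
  fix p assume "p \<in> cart_verts (cycle_verts m) (cycle_verts 7)"
  then have "fst p < m" "snd p < 7" by (auto simp: cart_verts_def cycle_verts_def)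
  then show "fcol m p \<in> {1..4}"
    unfolding fcol_def using Fc_range T_lt assms(1) by blast
next
  fix u v
  assume h: "P4_ends (cart_verts (cycle_verts m) (cycle_verts 7)) (cart_adj (cycle_adj m) (cycle_adj 7)) u v"
  obtain e d where ed: "offs e d" "R m v (int (fst u) + e) (int (snd u) + d)"
    using path_lemma[OF h] by blast
  have ru: "R m u (int (fst u)) (int (snd u))"
    using h by (auto simp: R_def P4_ends_def cart_verts_def cycle_verts_def)
  have m0: "m > 0" using assms by simp
  show "fcol m u \<noteq> fcol m v"
    using R_g[OF ru m0] R_g[OF ed(2) m0] K[OF assms ed(1)] by simp
qed


lemma vadj:
  assumes "i < m" "j < 7"
  shows "cart_adj (cycle_adj m) (cycle_adj 7) (i, j) (i, (j + 1) mod 7)"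
  using assms unfolding cart_adj_def cycle_adj_def by simp

lemma hadj:
  assumes "2 \<le> m" "j < 7"
  shows "cart_adj (cycle_adj m) (cycle_adj 7) (0, j) (1, j)"
    "cart_adj (cycle_adj m) (cycle_adj 7) (1, j) (0, j)"
  using assms unfolding cart_adj_def cycle_adj_def by auto

lemma inV: "i < m \<Longrightarrow> j < 7 \<Longrightarrow> (i, j) \<in> cart_verts (cycle_verts m) (cycle_verts 7)"
  by (simp add: cart_verts_def cycle_verts_def)

lemma dist3: "j < 7 \<Longrightarrow> distinct [j, (j+1) mod 7, (j+2) mod 7, (j+3) mod (7::nat)]"
  by (cases "j = 0 \<or> j = 1 \<or> j = 2 \<or> j = 3 \<or> j = 4 \<or> j = 5 \<or> j = 6") auto

lemma p4_3:
  assumes "m \<ge> 4" "j < 7"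
  shows "P4_ends (cart_verts (cycle_verts m) (cycle_verts 7)) (cart_adj (cycle_adj m) (cycle_adj 7))
           (0, j) (0, (j + 3) mod 7)"
proof -
  have m0: "0 < m" using assms by simp
  have e: "((j + 1) mod 7 + 1) mod 7 = (j + 2) mod 7"
    "((j + 2) mod 7 + 1) mod 7 = (j + 3) mod 7" by (simp_all only: mod_add_left_eq; simp add: add.commute)+
  have d: "distinct [(0::nat, j), (0, (j + 1) mod 7), (0, (j + 2) mod 7), (0, (j + 3) mod 7)]"
    using dist3[OF assms(2)] by auto
  have l: "(j + 1) mod 7 < 7" "(j + 2) mod 7 < 7" "(j + 3) mod 7 < 7" by simp_all
  note a1 = vadj[OF m0 assms(2)]
  note a2 = vadj[OF m0 l(1), unfolded e(1)]
  note a3 = vadj[OF m0 l(2), unfolded e(2)]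
  show ?thesis unfolding P4_ends_def
    using d a1 a2 a3 inV[OF m0 assms(2)] inV[OF m0 l(1)] inV[OF m0 l(2)] inV[OF m0 l(3)] by blast
qed

lemma p4_1:
  assumes "m \<ge> 4" "j < 7"
  shows "P4_ends (cart_verts (cycle_verts m) (cycle_verts 7)) (cart_adj (cycle_adj m) (cycle_adj 7))
           (0, j) (0, (j + 1) mod 7)"
proof -
  have m0: "0 < m" "1 < m" "2 \<le> m" using assms by simp_all
  have j1: "(j + 1) mod 7 < 7" "j \<noteq> (j + 1) mod 7" using assms(2) by (simp, cases "j = 6", simp_all)
  note a1 = hadj(1)[OF m0(3) assms(2)]
  note a2 = vadj[OF m0(2) assms(2)]
  note a3 = hadj(2)[OF m0(3) j1(1)]
  have d: "distinct [(0::nat, j), (1, j), (1, (j + 1) mod 7), (0, (j + 1) mod 7)]"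
    using j1(2) by auto
  show ?thesis unfolding P4_ends_def
    using d a1 a2 a3 inV[OF m0(1) assms(2)] inV[OF m0(2) assms(2)] inV[OF m0(2) j1(1)] inV[OF m0(1) j1(1)] by blast
qed

lemma three_col:
  fixes c :: "nat \<Rightarrow> nat"
  assumes r: "\<And>j. j < 7 \<Longrightarrow> c j \<in> {1..3}"
    and d1: "\<And>j k. j < 7 \<Longrightarrow> k = (j + 1) mod 7 \<Longrightarrow> c j \<noteq> c k"
    and d3: "\<And>j k. j < 7 \<Longrightarrow> k = (j + 3) mod 7 \<Longrightarrow> c j \<noteq> c k"
  shows False
proof -
  have v: "c 0 \<in> {1..3}" "c 1 \<in> {1..3}" "c 2 \<in> {1..3}" "c 3 \<in> {1..3}" "c 4 \<in> {1..3}"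
    "c 5 \<in> {1..3}" "c 6 \<in> {1..3}" by (rule r; simp)+
  have a: "c 0 \<noteq> c 1" "c 1 \<noteq> c 2" "c 2 \<noteq> c 3" "c 3 \<noteq> c 4" "c 4 \<noteq> c 5" "c 5 \<noteq> c 6" "c 6 \<noteq> c 0"
    by (rule d1; simp)+
  have b: "c 0 \<noteq> c 3" "c 1 \<noteq> c 4" "c 2 \<noteq> c 5" "c 3 \<noteq> c 6" "c 4 \<noteq> c 0" "c 5 \<noteq> c 1" "c 6 \<noteq> c 2"
    by (rule d3; simp)+
  have t: "x = y" if "x \<in> {1..3}" "y \<in> {1..3}" "p \<in> {1..3}" "q \<in> {1..3}"
    "y \<noteq> p" "y \<noteq> q" "p \<noteq> q" "x \<noteq> p" "x \<noteq> q" for x y p q :: nat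
    using that by auto
  have c5: "c 5 = c 0" using t[OF v(6) v(1) v(2) v(5)] a b by metis
  have c3: "c 3 = c 1" using t[OF v(4) v(2) v(1) v(5)] a b by metis
  have c2: "c 2 = c 4" using t[OF v(3) v(5) v(1) v(2)] a b c5 by metis
  show False using t[OF v(7) v(1) v(2) v(5)] a b c5 c3 c2 by metis
qed

lemma lower:
  assumes "m \<ge> 4" "e_injective_coloring (cart_verts (cycle_verts m) (cycle_verts 7))
                (cart_adj (cycle_adj m) (cycle_adj 7)) k f"
  shows "4 \<le> k"
proof (rule ccontr)
  assume "\<not> 4 \<le> k"
  then have k: "k \<le> 3" by simp
  define c where "c j = f (0, j)" for j
  have r: "c j \<in> {1..3}" if "j < 7" for j
    using assms(2) that k assms(1) unfolding e_injective_coloring_def c_def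
    by (fastforce simp: cart_verts_def cycle_verts_def)
  have d1: "c j \<noteq> c k" if "j < 7" "k = (j + 1) mod 7" for j k
    using assms(2) p4_1[OF assms(1) that(1)] that(2) unfolding e_injective_coloring_def c_def by blast
  have d3: "c j \<noteq> c k" if "j < 7" "k = (j + 3) mod 7" for j k
    using assms(2) p4_3[OF assms(1) that(1)] that(2) unfolding e_injective_coloring_def c_def by blast
  show False using three_col[of c, OF r d1 d3] by blast
qed

theorem theorem4p9:
  fixes m :: nat
  assumes "m \<ge> 4" and "m \<noteq> 5"
  shows "chi_ei (cart_verts (cycle_verts m) (cycle_verts 7))
                (cart_adj (cycle_adj m) (cycle_adj 7)) = 4"
  unfolding chi_ei_def
proof (rule Least_equality)
  show "\<exists>f. e_injective_coloring (cart_verts (cycle_verts m) (cycle_verts 7))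
                (cart_adj (cycle_adj m) (cycle_adj 7)) 4 f"
    using upper[OF assms] by blast
next
  fix k assume "\<exists>f. e_injective_coloring (cart_verts (cycle_verts m) (cycle_verts 7))
                (cart_adj (cycle_adj m) (cycle_adj 7)) k f"
  then show "4 \<le> k" using lower assms(1) by blast
qed

end
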